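(* Let $d\ge 1$, let $\gamma>0$ be real and let $\varepsilon>0$. There exists a positive integer $k$ (depending only on $d,\gamma,\varepsilon$, not on $n$ or $\lambda$) with the following property. For every $n$ and every partition $\lambda=(\lambda_1,\dots,\lambda_d)\vdash n$ with exactly $d$ parts satisfying $\lambda_j/n\ge\gamma$ for all $j=1,\dots,d$, there exist integers $1\le i\le d+1$ and $1\le q<k$ and a partition $\mu=(\mu_1,\dots,\mu_{d+1})$ of $n'=kn$ such that (1) $\mu_j=q\lambda_j$ for all $j\le i-1$; (2) $\mu_{j+1}=q\lambda_j$ for all $j$ with $i\le j\le d$ (and $\mu_i=(k-q)n$); (3) $|\Phi(\mu)-\Phi(\lambda)-1|<\varepsilon$.
   Context: For real numbers $x_1,\dots,x_k\ge 0$ with $x_1+\cdots+x_k=1$ define $\Phi(x_1,\dots,x_k)=\dfrac{1}{x_1^{x_1}\cdots x_k^{x_k}}$, with $0^0=1$. For a partition $\lambda=(\lambda_1,\dots,\lambda_k)\vdash n$ put $\Phi(\lambda)=\Phi(\lambda_1/n,\dots,\lambda_k/n)$ (zero parts may be appended without changing the value). *)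

theory Defs
  imports Complex_Main
begin

text \<open>x^x with the convention 0^0 = 1 (note: 0 powr 0 = 0 in Isabelle).\<close>
definition selfpow :: "real \<Rightarrow> real" where
  "selfpow x = (if x = 0 then 1 else x powr x)"

definition Phi :: "nat \<Rightarrow> (nat \<Rightarrow> real) \<Rightarrow> real" where
  "Phi m x = 1 / (\<Prod>j\<in>{1..m}. selfpow (x j))"

definition Phi_part :: "nat \<Rightarrow> nat \<Rightarrow> (nat \<Rightarrow> nat) \<Rightarrow> real" where
  "Phi_part n m lam = Phi m (\<lambda>j. real (lam j) / real n)"

definition is_partition :: "nat \<Rightarrow> nat \<Rightarrow> (nat \<Rightarrow> nat) \<Rightarrow> bool" where
  "is_partition n m lam \<longleftrightarrow>
     (\<forall>j. 1 \<le> j \<and> j < m \<longrightarrow> lam (j+1) \<le> lam j) \<and> (\<Sum>j\<in>{1..m}. lam j) = n"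

end

theory Submission
  imports Defs
begin


lemma ln_lower: "x > 0 \<Longrightarrow> ln (x::real) \<ge> 1 - 1/x"
proof -
  assume x: "x > 0"
  have "ln (1/x) \<le> 1/x - 1" using x by (intro ln_le_minus_one) simp
  thus ?thesis using x by (simp add: ln_div)
qed

lemma key:
  fixes L t M \<delta> :: real
  assumes L0: "0 \<le> L" and LM: "exp L \<le> M" and t0: "0 < t" and tts: "t \<le> exp L / (exp L + 1)"
    and d: "exp L / (exp L + 1) - t \<le> \<delta>"
  shows "\<bar>exp (- t * ln t - (1 - t) * ln (1 - t) + t * L) - exp L - 1\<bar> \<le> (M+1)^3 * \<delta>^2"
proof -
  define A where "A = exp L + 1"
  define ts where "ts = exp L / A"
  have A1: "A \<ge> 2" using L0 unfolding A_def by simp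
  have eL: "exp L \<ge> 1" using L0 by simp
  have ep: "exp L > 0" by simp
  have Apos: "A > 0" using A1 by simp
  have eA: "exp L < A" by (simp add: A_def)
  have ts0a: "0 < ts" unfolding ts_def using Apos ep by simp
  have ts0b: "ts < 1" unfolding ts_def using Apos eA by simp
  note ts0 = ts0a ts0b
  have ts1: "1 - ts = 1 / A"
  proof -
    have "1 - ts = (A - exp L)/A" using Apos by (simp add: ts_def field_simps)
    also have "A - exp L = 1" by (simp add: A_def)
    finally show ?thesis .
  qed
  have t1: "t < 1" using tts ts0 unfolding ts_def A_def by simp
  have tts': "t \<le> ts" using tts unfolding ts_def A_def .
  have lnts: "ln ts = L - ln A" unfolding ts_def using A1 by (simp add: ln_div)
  have lnts1: "ln (1 - ts) = - ln A" using ts1 A1 by (simp add: ln_div)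
  define G where "G = - t * ln t - (1 - t) * ln (1 - t) + t * L"
  define E where "E = t * ln (t/ts) + (1-t) * ln ((1-t)/(1-ts))"
  have EG: "E = ln A - G" unfolding E_def G_def using t0 t1 ts0
    by (simp add: ln_div lnts lnts1 algebra_simps)
  have E0: "E \<ge> 0"
  proof -
    have "ln (t/ts) \<ge> 1 - ts/t" using ln_lower[of "t/ts"] t0 ts0 by simp
    hence a: "t * ln (t/ts) \<ge> t - ts" using t0 by (simp add: field_simps)
    have "ln ((1-t)/(1-ts)) \<ge> 1 - (1-ts)/(1-t)" using ln_lower[of "(1-t)/(1-ts)"] t1 ts0 by simp
    hence b: "(1-t) * ln ((1-t)/(1-ts)) \<ge> (1-t) - (1-ts)" using t1
      by (simp add: field_simps)
    show ?thesis using a b unfolding E_def by simp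
  qed
  have ED: "E \<le> (t - ts)^2 / (ts * (1 - ts))"
  proof -
    have a: "t * ln (t/ts) \<le> t * (t/ts - 1)" using t0 ts0 by (intro mult_left_mono ln_le_minus_one) auto
    have b: "(1-t) * ln ((1-t)/(1-ts)) \<le> (1-t) * ((1-t)/(1-ts) - 1)" using t1 ts0
      by (intro mult_left_mono ln_le_minus_one) auto
    have "t * (t/ts - 1) + (1-t) * ((1-t)/(1-ts) - 1) = (t - ts)^2 / (ts * (1 - ts))"
      using ts0 by (simp add: field_simps power2_eq_square)
    thus ?thesis using a b unfolding E_def by simp
  qed
  have D2: "(t - ts)^2 / (ts * (1 - ts)) = (t - ts)^2 * A^2 / exp L"
    unfolding ts_def using A1 by (simp add: ts1[unfolded ts_def] field_simps power2_eq_square)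
  have expG: "exp G = A * exp (- E)" using EG A1 by (simp add: exp_diff)
  have up: "exp G \<le> A" using expG E0 A1 by simp
  have lo: "exp G \<ge> A * (1 - E)"
  proof -
    have "exp (-E) \<ge> 1 - E" using exp_ge_add_one_self[of "-E"] by simp
    thus ?thesis using expG A1 by simp
  qed
  have "\<bar>exp G - exp L - 1\<bar> = A - exp G" using up unfolding A_def by simp
  also have "\<dots> \<le> A * E" using lo by (simp add: algebra_simps)
  also have "\<dots> \<le> A * ((t - ts)^2 * A^2 / exp L)" using ED D2 Apos by (intro mult_left_mono) auto
  also have "\<dots> \<le> A * ((t - ts)^2 * A^2)"
  proof -
    have Xn: "0 \<le> (t-ts)^2*A^2" by simp
    have "1 / exp L \<le> 1" using eL by simp
    hence "(t-ts)^2*A^2 * (1 / exp L) \<le> (t-ts)^2*A^2 * 1" using Xn by (intro mult_left_mono) auto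
    thus ?thesis using Apos by (intro mult_left_mono) auto
  qed
  also have "\<dots> \<le> (M+1)^3 * \<delta>^2"
  proof -
    have d': "ts - t \<le> \<delta>" using d unfolding ts_def A_def .
    have "(ts - t)^2 \<le> \<delta>^2" using tts' d' by (intro power_mono) auto
    hence "(t - ts)^2 \<le> \<delta>^2" by (simp add: power2_commute)
    moreover have "A^3 \<le> (M+1)^3" using LM A1 unfolding A_def by (intro power_mono) auto
    ultimately have "A^3 * (t-ts)^2 \<le> (M+1)^3 * \<delta>^2" using A1 LM eL by (intro mult_mono) auto
    thus ?thesis by (simp add: power3_eq_cube power2_eq_square algebra_simps)
  qed
  finally show ?thesis unfolding G_def .
qed


lemma bij_insert_at:
  assumes "1 \<le> i" "i \<le> d+1"
  shows "bij_betw (\<lambda>j::nat. if j < i then j else j+1) {1..d} ({1..d+1}-{i})"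
  unfolding bij_betw_def
proof
  show "inj_on (\<lambda>j::nat. if j < i then j else j+1) {1..d}"
    by (auto simp: inj_on_def split: if_splits)
  show "(\<lambda>j::nat. if j < i then j else j+1) ` {1..d} = {1..d+1}-{i}"
  proof
    show "(\<lambda>j::nat. if j < i then j else j+1) ` {1..d} \<subseteq> {1..d+1}-{i}"
      using assms by auto
    show "{1..d+1}-{i} \<subseteq> (\<lambda>j::nat. if j < i then j else j+1) ` {1..d}"
    proof
      fix x assume x: "x \<in> {1..d+1}-{i}"
      show "x \<in> (\<lambda>j::nat. if j < i then j else j+1) ` {1..d}"
      proof (cases "x < i")
        case True thus ?thesis using x assms by (intro rev_image_eqI[of x]) auto
      next
        case False thus ?thesis using x assms by (intro rev_image_eqI[of "x-1"]) auto
      qed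
    qed
  qed
qed

lemma prod_insert_at:
  fixes F :: "nat \<Rightarrow> 'a::comm_monoid_mult"
  assumes "1 \<le> i" "i \<le> d+1"
  shows "(\<Prod>j\<in>{1..d+1}. F j) = F i * (\<Prod>j\<in>{1..d}. F (if j < i then j else j+1))"
proof -
  have "(\<Prod>j\<in>{1..d+1}. F j) = F i * (\<Prod>j\<in>{1..d+1}-{i}. F j)" using assms by (intro prod.remove) auto
  moreover have "(\<Prod>j\<in>{1..d}. F (if j < i then j else j+1)) = (\<Prod>j\<in>{1..d+1}-{i}. F j)"
    using prod.reindex_bij_betw[OF bij_insert_at[OF assms], of F] by simp
  ultimately show ?thesis by simp
qed

lemma sum_insert_at:
  fixes F :: "nat \<Rightarrow> 'a::comm_monoid_add"
  assumes "1 \<le> i" "i \<le> d+1"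
  shows "(\<Sum>j\<in>{1..d+1}. F j) = F i + (\<Sum>j\<in>{1..d}. F (if j < i then j else j+1))"
proof -
  have "(\<Sum>j\<in>{1..d+1}. F j) = F i + (\<Sum>j\<in>{1..d+1}-{i}. F j)" using assms by (intro sum.remove) auto
  moreover have "(\<Sum>j\<in>{1..d}. F (if j < i then j else j+1)) = (\<Sum>j\<in>{1..d+1}-{i}. F j)"
    using sum.reindex_bij_betw[OF bij_insert_at[OF assms], of F] by simp
  ultimately show ?thesis by simp
qed

lemma selfpow_pos: "x > 0 \<Longrightarrow> selfpow x = exp (x * ln x)"
  by (simp add: selfpow_def powr_def)



theorem lemma3:
  fixes d :: nat and \<gamma> \<epsilon> :: real
  assumes "d \<ge> 1" and "\<gamma> > 0" and "\<epsilon> > 0"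
  shows "\<exists>k::nat. k > 0 \<and>
    (\<forall>(n::nat) (lam::nat \<Rightarrow> nat).
       is_partition n d lam \<and> (\<forall>j\<in>{1..d}. lam j > 0) \<and>
       (\<forall>j\<in>{1..d}. real (lam j) / real n \<ge> \<gamma>) \<longrightarrow>
       (\<exists>(i::nat) (q::nat) (mu::nat \<Rightarrow> nat).
          1 \<le> i \<and> i \<le> d + 1 \<and> 1 \<le> q \<and> q < k \<and>
          is_partition (k * n) (d + 1) mu \<and>
          (\<forall>j. 1 \<le> j \<and> j \<le> i - 1 \<longrightarrow> mu j = q * lam j) \<and>
          (\<forall>j. i \<le> j \<and> j \<le> d \<longrightarrow> mu (j + 1) = q * lam j) \<and>
          mu i = (k - q) * n \<and>
          \<bar>Phi_part (k * n) (d + 1) mu - Phi_part n d lam - 1\<bar> < \<epsilon>))"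
  proof -
  define M where "M = 1/\<gamma>"
  define k where "k = nat \<lceil>(M+1)^3/\<epsilon>\<rceil> + 2"
  have k2: "k \<ge> 2" unfolding k_def by simp
  have kbig: "real k > (M+1)^3/\<epsilon>"
  proof -
    have "real (nat \<lceil>(M+1)^3/\<epsilon>\<rceil>) \<ge> (M+1)^3/\<epsilon>" by linarith
    thus ?thesis unfolding k_def by simp
  qed
  show ?thesis
  proof (rule exI[of _ k], intro conjI allI impI)
    show "k > 0" using k2 by simp
    fix n :: nat and lam :: "nat \<Rightarrow> nat"
    assume H: "is_partition n d lam \<and> (\<forall>j\<in>{1..d}. lam j > 0) \<and>
       (\<forall>j\<in>{1..d}. real (lam j) / real n \<ge> \<gamma>)"
    have mono: "\<And>j. 1 \<le> j \<Longrightarrow> j < d \<Longrightarrow> lam (j+1) \<le> lam j"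
      and sumn: "(\<Sum>j\<in>{1..d}. lam j) = n"
      using H unfolding is_partition_def by auto
    have lpos: "\<And>j. j \<in> {1..d} \<Longrightarrow> lam j > 0" using H by auto
    have gam: "\<And>j. j \<in> {1..d} \<Longrightarrow> real (lam j) / real n \<ge> \<gamma>" using H by auto
    have npos: "n > 0"
    proof -
      have "lam 1 \<le> (\<Sum>j\<in>{1..d}. lam j)" using assms(1) by (intro member_le_sum) auto
      thus ?thesis using lpos[of 1] assms(1) sumn by auto
    qed
    define x where "x j = real (lam j) / real n" for j
    have xpos: "\<And>j. j \<in> {1..d} \<Longrightarrow> x j > 0" using lpos npos by (simp add: x_def)
    have xsum: "(\<Sum>j\<in>{1..d}. x j) = 1"
    proof -
      have "(\<Sum>j\<in>{1..d}. x j) = (\<Sum>j\<in>{1..d}. real (lam j)) / real n"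
        by (simp add: x_def sum_divide_distrib)
      also have "(\<Sum>j\<in>{1..d}. real (lam j)) = real n" using sumn by (metis of_nat_sum)
      finally show ?thesis using npos by simp
    qed
    have xle1: "\<And>j. j \<in> {1..d} \<Longrightarrow> x j \<le> 1"
    proof -
      fix j assume j: "j \<in> {1..d}"
      have "x j \<le> (\<Sum>j\<in>{1..d}. x j)" using j xpos by (intro member_le_sum) (auto intro: less_imp_le)
      thus "x j \<le> 1" using xsum by simp
    qed
    have xge: "\<And>j. j \<in> {1..d} \<Longrightarrow> x j \<ge> \<gamma>" using gam by (simp add: x_def)
    define L where "L = - (\<Sum>j\<in>{1..d}. x j * ln (x j))"
    have L0: "0 \<le> L"
    proof -
      have "(\<Sum>j\<in>{1..d}. x j * ln (x j)) \<le> 0"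
      proof (intro sum_nonpos)
        fix j assume j: "j \<in> {1..d}"
        have "ln (x j) \<le> 0" using xpos[OF j] xle1[OF j] by simp
        thus "x j * ln (x j) \<le> 0" using xpos[OF j] by (simp add: mult_nonneg_nonpos)
      qed
      thus ?thesis unfolding L_def by simp
    qed
    have LM: "exp L \<le> M"
    proof -
      have "(\<Sum>j\<in>{1..d}. x j * ln \<gamma>) \<le> (\<Sum>j\<in>{1..d}. x j * ln (x j))"
      proof (intro sum_mono)
        fix j assume j: "j \<in> {1..d}"
        have "ln \<gamma> \<le> ln (x j)" using xge[OF j] assms(2) by simp
        thus "x j * ln \<gamma> \<le> x j * ln (x j)" using xpos[OF j] by (simp add: mult_left_mono)
      qed
      also have "(\<Sum>j\<in>{1..d}. x j * ln \<gamma>) = ln \<gamma>" using xsum by (simp add: sum_distrib_right[symmetric])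
      finally have "L \<le> - ln \<gamma>" unfolding L_def by simp
      hence "exp L \<le> exp (- ln \<gamma>)" by simp
      also have "\<dots> = M" using assms(2) by (simp add: M_def exp_minus inverse_eq_divide)
      finally show ?thesis .
    qed
    have PhiL: "Phi_part n d lam = exp L"
    proof -
      have "(\<Prod>j\<in>{1..d}. selfpow (real (lam j) / real n)) = (\<Prod>j\<in>{1..d}. exp (x j * ln (x j)))"
        using xpos by (intro prod.cong) (auto simp: selfpow_pos x_def[symmetric])
      also have "\<dots> = exp (- L)" by (simp add: L_def exp_sum)
      finally show ?thesis by (simp add: Phi_part_def Phi_def exp_minus divide_inverse)
    qed
    define ts where "ts = exp L / (exp L + 1)"
    have eL: "exp L \<ge> 1" using L0 by simp
    have e1p: "exp L + 1 > 0" using eL by linarith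
    have ts_half: "ts \<ge> 1/2" unfolding ts_def pos_le_divide_eq[OF e1p] using eL by (simp add: algebra_simps)
    have ts1: "ts < 1" unfolding ts_def pos_divide_less_eq[OF e1p] by simp
    define q where "q = nat \<lfloor>real k * ts\<rfloor>"
    have k2r: "real k \<ge> 2" using k2 by simp
    have "2 * (1/2) \<le> real k * ts" using k2r ts_half by (intro mult_mono) auto
    hence kts: "real k * ts \<ge> 1" by simp
    have qle: "real q \<le> real k * ts" unfolding q_def using kts by linarith
    have qgt: "real k * ts < real q + 1" unfolding q_def using kts by linarith
    have q1: "1 \<le> q" unfolding q_def using kts by linarith
    have qk: "q < k"
    proof -
      have "real k * ts < real k" using ts1 k2 by simp
      thus ?thesis using qle by linarith
    qed
    define t where "t = real q / real k"
    have kpos: "real k > 0" using k2 by simp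
    have t0: "t > 0" using q1 kpos by (simp add: t_def)
    have tts: "t \<le> ts" using qle kpos by (simp add: t_def field_simps)
    have tts2: "ts - t < 1 / real k"
    proof -
      have "ts - t = (real k * ts - real q) / real k" using kpos by (simp add: t_def diff_divide_distrib)
      also have "\<dots> < 1 / real k" using qgt kpos by (intro divide_strict_right_mono) auto
      finally show ?thesis .
    qed
    have t1: "t < 1" using tts ts1 by simp
    define P where "P i \<longleftrightarrow> (i = d+1 \<or> q * lam i \<le> (k-q)*n)" for i
    define i where "i = (LEAST i. 1 \<le> i \<and> P i)"
    have exP: "1 \<le> d+1 \<and> P (d+1)" by (simp add: P_def)
    have hi: "1 \<le> i \<and> P i" unfolding i_def using exP by (rule LeastI)
    have id: "i \<le> d+1" unfolding i_def using exP by (rule Least_le)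
    have notP: "\<And>j. 1 \<le> j \<Longrightarrow> j < i \<Longrightarrow> \<not> P j"
      using not_less_Least unfolding i_def by blast
    define mu where "mu j = (if j < i then q * lam j else if j = i then (k-q)*n else q * lam (j-1))" for j
    have muS: "\<And>j. mu (if j < i then j else j+1) = q * lam j" by (simp add: mu_def)
    have i1: "1 \<le> i" using hi by simp
    have part: "is_partition (k * n) (d + 1) mu"
      unfolding is_partition_def
    proof (intro conjI allI impI)
      fix j assume j: "1 \<le> j \<and> j < d+1"
      show "mu (j+1) \<le> mu j"
      proof -
        consider "j+1 < i" | "j+1 = i" | "j = i" | "j > i" by linarith
        thus ?thesis
        proof cases
          case 1 thus ?thesis using mono[of j] j id by (simp add: mu_def)
        next
          case 2
          have "\<not> P j" using notP[of j] j 2 by simp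
          thus ?thesis using 2 by (simp add: mu_def P_def)
        next
          case 3
          have "i \<noteq> d+1" using 3 j by simp
          thus ?thesis using 3 hi by (simp add: mu_def P_def)
        next
          case 4
          have "lam j \<le> lam (j-1)" using mono[of "j-1"] j 4 i1 by simp
          thus ?thesis using 4 by (simp add: mu_def)
        qed
      qed
    next
      have "(\<Sum>j\<in>{1..d+1}. mu j) = mu i + (\<Sum>j\<in>{1..d}. q * lam j)"
        using sum_insert_at[OF i1 id, of mu] by (simp add: muS)
      also have "\<dots> = (k-q)*n + q*n" using sumn by (simp add: mu_def sum_distrib_left[symmetric])
      also have "\<dots> = k*n" using qk by (simp add: add_mult_distrib[symmetric])
      finally show "(\<Sum>j\<in>{1..d+1}. mu j) = k*n" .
    qed
    have PhiM: "Phi_part (k*n) (d+1) mu = exp (- t * ln t - (1 - t) * ln (1 - t) + t * L)"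
    proof -
      let ?F = "\<lambda>j. selfpow (real (mu j) / real (k*n))"
      have "(\<Prod>j\<in>{1..d+1}. ?F j) = ?F i * (\<Prod>j\<in>{1..d}. ?F (if j < i then j else j+1))"
        by (rule prod_insert_at[OF i1 id])
      also have "?F i = exp ((1-t) * ln (1-t))"
      proof -
        have "real (mu i) / real (k*n) = 1 - t"
          using qk npos kpos by (simp add: mu_def t_def of_nat_diff field_simps)
        thus ?thesis using t1 by (simp add: selfpow_pos)
      qed
      also have "(\<Prod>j\<in>{1..d}. ?F (if j < i then j else j+1)) = (\<Prod>j\<in>{1..d}. exp (t * x j * (ln t + ln (x j))))"
      proof (intro prod.cong refl)
        fix j assume j: "j \<in> {1..d}"
        have "real (mu (if j < i then j else j+1)) / real (k*n) = t * x j"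
          using npos kpos by (simp only: muS) (simp add: t_def x_def field_simps)
        thus "?F (if j < i then j else j+1) = exp (t * x j * (ln t + ln (x j)))"
          using t0 xpos[OF j] by (simp add: selfpow_pos ln_mult)
      qed
      also have "\<dots> = exp (\<Sum>j\<in>{1..d}. t * x j * (ln t + ln (x j)))" by (simp add: exp_sum)
      also have "(\<Sum>j\<in>{1..d}. t * x j * (ln t + ln (x j))) = t * ln t * (\<Sum>j\<in>{1..d}. x j) + t * (\<Sum>j\<in>{1..d}. x j * ln (x j))"
        by (simp add: algebra_simps sum.distrib sum_distrib_left)
      also have "\<dots> = t * ln t - t * L" using xsum by (simp add: L_def)
      finally have "(\<Prod>j\<in>{1..d+1}. ?F j) = exp ((1-t) * ln (1-t) + (t * ln t - t * L))"
        by (simp add: exp_add)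
      hence "Phi_part (k*n) (d+1) mu = inverse (exp ((1-t) * ln (1-t) + (t * ln t - t * L)))"
        by (simp add: Phi_part_def Phi_def divide_inverse)
      also have "\<dots> = exp (-((1-t) * ln (1-t) + (t * ln t - t * L)))" by (rule exp_minus[symmetric])
      also have "-((1-t) * ln (1-t) + (t * ln t - t * L)) = - t * ln t - (1 - t) * ln (1 - t) + t * L"
        by (simp add: algebra_simps)
      finally show ?thesis .
    qed
    have bound: "\<bar>Phi_part (k * n) (d + 1) mu - Phi_part n d lam - 1\<bar> < \<epsilon>"
    proof -
      have "\<bar>Phi_part (k * n) (d + 1) mu - Phi_part n d lam - 1\<bar> \<le> (M+1)^3 * (ts - t)^2"
        unfolding PhiM PhiL using key[OF L0 LM t0 tts[unfolded ts_def]] by (simp add: ts_def)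
      also have "\<dots> \<le> (M+1)^3 * (1 / real k)"
      proof -
        have "(ts - t)^2 \<le> (1/real k)^2" using tts tts2 by (intro power_mono) auto
        also have "\<dots> \<le> 1/real k" using k2 by (simp add: power2_eq_square field_simps)
        finally have a: "(ts - t)^2 \<le> 1/real k" .
        have "0 \<le> M+1" using LM eL by linarith
        hence "0 \<le> (M+1)^3" by simp
        with a show ?thesis by (intro mult_left_mono)
      qed
      also have "\<dots> < \<epsilon>" using kbig kpos assms(3) by (simp add: field_simps)
      finally show ?thesis .
    qed
    have c1: "\<forall>j. 1 \<le> j \<and> j \<le> i - 1 \<longrightarrow> mu j = q * lam j" by (auto simp: mu_def)
    have c2: "\<forall>j. i \<le> j \<and> j \<le> d \<longrightarrow> mu (j + 1) = q * lam j" by (auto simp: mu_def)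
    have c3: "mu i = (k - q) * n" by (simp add: mu_def)
    show "\<exists>(i::nat) (q::nat) (mu::nat \<Rightarrow> nat).
          1 \<le> i \<and> i \<le> d + 1 \<and> 1 \<le> q \<and> q < k \<and>
          is_partition (k * n) (d + 1) mu \<and>
          (\<forall>j. 1 \<le> j \<and> j \<le> i - 1 \<longrightarrow> mu j = q * lam j) \<and>
          (\<forall>j. i \<le> j \<and> j \<le> d \<longrightarrow> mu (j + 1) = q * lam j) \<and>
          mu i = (k - q) * n \<and>
          \<bar>Phi_part (k * n) (d + 1) mu - Phi_part n d lam - 1\<bar> < \<epsilon>"
      using i1 id q1 qk part c1 c2 c3 bound by blast
  qed
qed

end
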